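(* Let $n\geq 2$ and let $N$ be any integer. The matrix ring $\mathrm{Mat}_n(\mathbb{Z}/N\mathbb{Z})$ has the presentation (as a unital associative ring) $$\mathrm{Mat}_n(\mathbb{Z}/N\mathbb{Z})\cong\langle x,y \mid x^n=0,\ y^n=0,\ xy+(N+1)y^{n-1}x^{n-1}=1\rangle.$$
   Context: All rings are associative with unit, and presentations are taken in the category of unital associative rings: the right-hand side is the quotient of the free ring $\mathbb{Z}\langle x,y\rangle$ by the two-sided ideal generated by $x^n$, $y^n$ and $xy+(N+1)y^{n-1}x^{n-1}-1$. *)

theory Defs
  imports "HOL-Algebra.QuotRing"
begin

text \<open>The free unital associative ring Z<x,y>: finitely supported integer-valued
functions on words over the two-letter alphabet (True = x, False = y).\<close>

definition fr_mult :: "(bool list \<Rightarrow> int) \<Rightarrow> (bool list \<Rightarrow> int) \<Rightarrow> bool list \<Rightarrow> int" where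
  "fr_mult f g w = (\<Sum>k\<in>{0..length w}. f (take k w) * g (drop k w))"

definition fr_one :: "bool list \<Rightarrow> int" where
  "fr_one w = (if w = [] then 1 else 0)"

definition free_ring2 :: "(bool list \<Rightarrow> int) ring" where
  "free_ring2 = \<lparr>carrier = {f. finite {w. f w \<noteq> 0}}, mult = fr_mult, one = fr_one,
     zero = (\<lambda>w. 0), add = (\<lambda>f g w. f w + g w)\<rparr>"

definition gen_x :: "bool list \<Rightarrow> int" where
  "gen_x = (\<lambda>w. if w = [True] then 1 else 0)"

definition gen_y :: "bool list \<Rightarrow> int" where
  "gen_y = (\<lambda>w. if w = [False] then 1 else 0)"

definition presented_ring :: "nat \<Rightarrow> int \<Rightarrow> (bool list \<Rightarrow> int) set ring" where
  "presented_ring n N = free_ring2 Quot genideal free_ring2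
     { gen_x [^]\<^bsub>free_ring2\<^esub> n,
       gen_y [^]\<^bsub>free_ring2\<^esub> n,
       (gen_x \<otimes>\<^bsub>free_ring2\<^esub> gen_y)
         \<oplus>\<^bsub>free_ring2\<^esub> (add_pow free_ring2 (N + 1)
              ((gen_y [^]\<^bsub>free_ring2\<^esub> (n - 1)) \<otimes>\<^bsub>free_ring2\<^esub> (gen_x [^]\<^bsub>free_ring2\<^esub> (n - 1))))
         \<ominus>\<^bsub>free_ring2\<^esub> \<one>\<^bsub>free_ring2\<^esub> }"

text \<open>The matrix ring Mat_n(Z/NZ): n x n matrices (indices < n, entries outside are 0)
whose entries are the canonical representatives r with r mod N = r; all operations
reduce modulo N.  For N = 0 this is Mat_n(Z), for N = 1 or -1 the zero ring.\<close>

definition mat_mult_mod :: "nat \<Rightarrow> int \<Rightarrow> (nat \<Rightarrow> nat \<Rightarrow> int) \<Rightarrow> (nat \<Rightarrow> nat \<Rightarrow> int) \<Rightarrow> nat \<Rightarrow> nat \<Rightarrow> int" where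
  "mat_mult_mod n N A B i j = (if i < n \<and> j < n then (\<Sum>k<n. A i k * B k j) mod N else 0)"

definition mat_one_mod :: "nat \<Rightarrow> int \<Rightarrow> nat \<Rightarrow> nat \<Rightarrow> int" where
  "mat_one_mod n N i j = (if i < n \<and> j < n \<and> i = j then 1 mod N else 0)"

definition mat_add_mod :: "int \<Rightarrow> (nat \<Rightarrow> nat \<Rightarrow> int) \<Rightarrow> (nat \<Rightarrow> nat \<Rightarrow> int) \<Rightarrow> nat \<Rightarrow> nat \<Rightarrow> int" where
  "mat_add_mod N A B i j = (A i j + B i j) mod N"

definition matZN :: "nat \<Rightarrow> int \<Rightarrow> (nat \<Rightarrow> nat \<Rightarrow> int) ring" where
  "matZN n N = \<lparr>carrier = {A. (\<forall>i j. A i j mod N = A i j) \<and> (\<forall>i j. (n \<le> i \<or> n \<le> j) \<longrightarrow> A i j = 0)},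
     mult = mat_mult_mod n N, one = mat_one_mod n N, zero = (\<lambda>i j. 0), add = mat_add_mod N\<rparr>"

end

theory Submission
  imports Defs
begin

definition supp :: "(bool list \<Rightarrow> int) \<Rightarrow> bool list set" where
  "supp f = {w. f w \<noteq> 0}"

lemma carrier_F: "carrier free_ring2 = {f. finite (supp f)}"
  by (simp add: free_ring2_def supp_def)

lemma F_simps: "mult free_ring2 = fr_mult" "one free_ring2 = fr_one" "zero free_ring2 = (\<lambda>w. 0)"
   "add free_ring2 = (\<lambda>f g w. f w + g w)"
  by (simp_all add: free_ring2_def)

lemma conv:
  assumes "finite A" "finite B" "supp f \<subseteq> A" "supp g \<subseteq> B"
  shows "fr_mult f g w = (\<Sum>a\<in>A. \<Sum>b\<in>B. if a @ b = w then f a * g b else 0)"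
proof -
  let ?P = "(\<lambda>k. (take k w, drop k w)) ` {0..length w}"
  have P: "?P = {p. fst p @ snd p = w}"
  proof -
    { fix p :: "bool list \<times> bool list" assume "fst p @ snd p = w"
      then have "p \<in> ?P" by (intro image_eqI[of _ _ "length (fst p)"]) auto }
    then show ?thesis by auto
  qed
  have inj: "inj_on (\<lambda>k. (take k w, drop k w)) {0..length w}"
    by (rule inj_onI) (metis atLeastAtMost_iff length_take min.absorb2 prod.inject)
  have "fr_mult f g w = (\<Sum>p\<in>?P. f (fst p) * g (snd p))"
    unfolding fr_mult_def by (subst sum.reindex[OF inj]) simp
  also have "\<dots> = (\<Sum>p\<in>A \<times> B. if fst p @ snd p = w then f (fst p) * g (snd p) else 0)"
  proof -
    have "(\<Sum>p\<in>A \<times> B. if fst p @ snd p = w then f (fst p) * g (snd p) else 0)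
        = (\<Sum>p\<in>(A \<times> B) \<inter> ?P. f (fst p) * g (snd p))"
      using assms by (simp add: sum.inter_restrict P)
    also have "\<dots> = (\<Sum>p\<in>?P. f (fst p) * g (snd p))"
      using assms by (intro sum.mono_neutral_left) (auto simp: supp_def)
    finally show ?thesis by simp
  qed
  also have "\<dots> = (\<Sum>a\<in>A. \<Sum>b\<in>B. if a @ b = w then f a * g b else 0)"
    by (simp add: sum.cartesian_product split_def)
  finally show ?thesis .
qed

lemma supp_mult: "supp (fr_mult f g) \<subseteq> (\<lambda>(a,b). a @ b) ` (supp f \<times> supp g)"
proof
  fix w assume "w \<in> supp (fr_mult f g)"
  then have "(\<Sum>k\<in>{0..length w}. f (take k w) * g (drop k w)) \<noteq> 0"
    unfolding supp_def fr_mult_def by simp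
  then obtain k where "k \<in> {0..length w}" "f (take k w) * g (drop k w) \<noteq> 0"
    by (meson sum.not_neutral_contains_not_neutral)
  then have "(take k w, drop k w) \<in> supp f \<times> supp g" by (simp add: supp_def)
  then show "w \<in> (\<lambda>(a,b). a @ b) ` (supp f \<times> supp g)"
    by (rule rev_image_eqI) simp
qed

lemma finite_supp_mult: "finite (supp f) \<Longrightarrow> finite (supp g) \<Longrightarrow> finite (supp (fr_mult f g))"
  by (rule finite_subset[OF supp_mult]) auto

lemma swap4: "(\<Sum>c\<in>C. \<Sum>d\<in>D. \<Sum>a\<in>A. \<Sum>b\<in>B. F c d a b) = (\<Sum>a\<in>A. \<Sum>b\<in>B. \<Sum>d\<in>D. \<Sum>c\<in>C. (F c d a b :: 'x::comm_monoid_add))"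
proof -
  have "(\<Sum>c\<in>C. \<Sum>d\<in>D. \<Sum>a\<in>A. \<Sum>b\<in>B. F c d a b) = (\<Sum>c\<in>C. \<Sum>a\<in>A. \<Sum>b\<in>B. \<Sum>d\<in>D. F c d a b)"
  proof (rule sum.cong[OF refl])
    fix c
    have "(\<Sum>d\<in>D. \<Sum>a\<in>A. \<Sum>b\<in>B. F c d a b) = (\<Sum>a\<in>A. \<Sum>d\<in>D. \<Sum>b\<in>B. F c d a b)" by (rule sum.swap)
    also have "\<dots> = (\<Sum>a\<in>A. \<Sum>b\<in>B. \<Sum>d\<in>D. F c d a b)" by (rule sum.cong[OF refl], rule sum.swap)
    finally show "(\<Sum>d\<in>D. \<Sum>a\<in>A. \<Sum>b\<in>B. F c d a b) = (\<Sum>a\<in>A. \<Sum>b\<in>B. \<Sum>d\<in>D. F c d a b)" .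
  qed
  also have "\<dots> = (\<Sum>a\<in>A. \<Sum>c\<in>C. \<Sum>b\<in>B. \<Sum>d\<in>D. F c d a b)" by (rule sum.swap)
  also have "\<dots> = (\<Sum>a\<in>A. \<Sum>b\<in>B. \<Sum>c\<in>C. \<Sum>d\<in>D. F c d a b)" by (rule sum.cong[OF refl], rule sum.swap)
  also have "\<dots> = (\<Sum>a\<in>A. \<Sum>b\<in>B. \<Sum>d\<in>D. \<Sum>c\<in>C. F c d a b)" by (rule sum.cong[OF refl], rule sum.cong[OF refl], rule sum.swap)
  finally show ?thesis .
qed

lemma triple:
  assumes "finite A" "finite B" "finite D" "supp f \<subseteq> A" "supp g \<subseteq> B" "supp h \<subseteq> D"
  shows "fr_mult (fr_mult f g) h w = (\<Sum>a\<in>A. \<Sum>b\<in>B. \<Sum>d\<in>D. if a @ b @ d = w then f a * g b * h d else 0)"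
proof -
  let ?C = "(\<lambda>(a,b). a @ b) ` (A \<times> B)"
  have fC: "finite ?C" using assms by auto
  have sC: "supp (fr_mult f g) \<subseteq> ?C" by (rule order_trans[OF supp_mult image_mono]) (use assms in auto)
  have "fr_mult (fr_mult f g) h w = (\<Sum>c\<in>?C. \<Sum>d\<in>D. if c @ d = w then fr_mult f g c * h d else 0)"
    by (rule conv[OF fC assms(3) sC assms(6)])
  also have "\<dots> = (\<Sum>c\<in>?C. \<Sum>d\<in>D. \<Sum>a\<in>A. \<Sum>b\<in>B. if a @ b = c \<and> c @ d = w then f a * g b * h d else 0)"
    by (rule sum.cong[OF refl], rule sum.cong[OF refl])
       (simp add: conv[OF assms(1,2,4,5)] sum_distrib_right if_distrib if_distribR cong: if_cong)
  also have "\<dots> = (\<Sum>a\<in>A. \<Sum>b\<in>B. \<Sum>d\<in>D. \<Sum>c\<in>?C. if a @ b = c \<and> c @ d = w then f a * g b * h d else 0)"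
    by (rule swap4)
  also have "\<dots> = (\<Sum>a\<in>A. \<Sum>b\<in>B. \<Sum>d\<in>D. if a @ b @ d = w then f a * g b * h d else 0)"
  proof (rule sum.cong[OF refl], rule sum.cong[OF refl], rule sum.cong[OF refl])
    fix a b d assume "a \<in> A" "b \<in> B"
    then have "a @ b \<in> ?C" by auto
    then show "(\<Sum>c\<in>?C. if a @ b = c \<and> c @ d = w then f a * g b * h d else 0) = (if a @ b @ d = w then f a * g b * h d else 0)"
    proof -
      have "(\<Sum>c\<in>?C. if a @ b = c \<and> c @ d = w then f a * g b * h d else 0)
          = (\<Sum>c\<in>?C. if a @ b = c then (if a @ b @ d = w then f a * g b * h d else 0) else 0)"
        by (rule sum.cong) auto
      then show ?thesis using \<open>a @ b \<in> ?C\<close> fC by (simp add: sum.delta sum.delta')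
    qed
  qed
  finally show ?thesis .
qed

lemma swap3: "(\<Sum>e\<in>E. \<Sum>b\<in>B. \<Sum>d\<in>D. F e b d) = (\<Sum>b\<in>B. \<Sum>d\<in>D. \<Sum>e\<in>E. (F e b d :: 'x::comm_monoid_add))"
proof -
  have "(\<Sum>e\<in>E. \<Sum>b\<in>B. \<Sum>d\<in>D. F e b d) = (\<Sum>b\<in>B. \<Sum>e\<in>E. \<Sum>d\<in>D. F e b d)" by (rule sum.swap)
  also have "\<dots> = (\<Sum>b\<in>B. \<Sum>d\<in>D. \<Sum>e\<in>E. F e b d)" by (rule sum.cong[OF refl], rule sum.swap)
  finally show ?thesis .
qed

lemma triple':
  assumes "finite A" "finite B" "finite D" "supp f \<subseteq> A" "supp g \<subseteq> B" "supp h \<subseteq> D"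
  shows "fr_mult f (fr_mult g h) w = (\<Sum>a\<in>A. \<Sum>b\<in>B. \<Sum>d\<in>D. if a @ b @ d = w then f a * g b * h d else 0)"
proof -
  let ?C = "(\<lambda>(a,b). a @ b) ` (B \<times> D)"
  have fC: "finite ?C" using assms by auto
  have sC: "supp (fr_mult g h) \<subseteq> ?C" by (rule order_trans[OF supp_mult image_mono]) (use assms in auto)
  have "fr_mult f (fr_mult g h) w = (\<Sum>a\<in>A. \<Sum>c\<in>?C. if a @ c = w then f a * fr_mult g h c else 0)"
    by (rule conv[OF assms(1) fC assms(4) sC])
  also have "\<dots> = (\<Sum>a\<in>A. \<Sum>c\<in>?C. \<Sum>b\<in>B. \<Sum>d\<in>D. if b @ d = c \<and> a @ c = w then f a * g b * h d else 0)"
    by (rule sum.cong[OF refl], rule sum.cong[OF refl])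
       (simp add: conv[OF assms(2,3,5,6)] sum_distrib_left if_distrib if_distribR mult.assoc cong: if_cong)
  also have "\<dots> = (\<Sum>a\<in>A. \<Sum>b\<in>B. \<Sum>d\<in>D. \<Sum>c\<in>?C. if b @ d = c \<and> a @ c = w then f a * g b * h d else 0)"
    by (rule sum.cong[OF refl], rule swap3)
  also have "\<dots> = (\<Sum>a\<in>A. \<Sum>b\<in>B. \<Sum>d\<in>D. if a @ b @ d = w then f a * g b * h d else 0)"
  proof (rule sum.cong[OF refl], rule sum.cong[OF refl], rule sum.cong[OF refl])
    fix a b d assume "b \<in> B" "d \<in> D"
    then have "b @ d \<in> ?C" by auto
    then show "(\<Sum>c\<in>?C. if b @ d = c \<and> a @ c = w then f a * g b * h d else 0) = (if a @ b @ d = w then f a * g b * h d else 0)"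
    proof -
      have "(\<Sum>c\<in>?C. if b @ d = c \<and> a @ c = w then f a * g b * h d else 0)
          = (\<Sum>c\<in>?C. if b @ d = c then (if a @ b @ d = w then f a * g b * h d else 0) else 0)"
        by (rule sum.cong) auto
      then show ?thesis using \<open>b @ d \<in> ?C\<close> fC by (simp add: sum.delta sum.delta')
    qed
  qed
  finally show ?thesis .
qed

lemma fr_assoc: "finite (supp f) \<Longrightarrow> finite (supp g) \<Longrightarrow> finite (supp h) \<Longrightarrow>
   fr_mult (fr_mult f g) h = fr_mult f (fr_mult g h)"
  by (rule ext) (simp add: triple triple')

lemma fr_ldistr: "fr_mult (\<lambda>w. f w + g w) h = (\<lambda>w. fr_mult f h w + fr_mult g h w)"
  by (rule ext) (simp add: fr_mult_def sum.distrib algebra_simps)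

lemma fr_rdistr: "fr_mult h (\<lambda>w. f w + g w) = (\<lambda>w. fr_mult h f w + fr_mult h g w)"
  by (rule ext) (simp add: fr_mult_def sum.distrib algebra_simps)

lemma fr_one_l: "fr_mult fr_one f = f"
proof (rule ext)
  fix w
  have "fr_mult fr_one f w = (\<Sum>k\<in>{0..length w}. if k = 0 then f w else 0)"
    unfolding fr_mult_def fr_one_def by (rule sum.cong) auto
  then show "fr_mult fr_one f w = f w" by simp
qed

lemma fr_one_r: "fr_mult f fr_one = f"
proof (rule ext)
  fix w
  have "fr_mult f fr_one w = (\<Sum>k\<in>{0..length w}. if k = length w then f w else 0)"
    unfolding fr_mult_def fr_one_def by (rule sum.cong) auto
  then show "fr_mult f fr_one w = f w" by simp
qed

lemma finite_supp_add: "finite (supp f) \<Longrightarrow> finite (supp g) \<Longrightarrow> finite (supp (\<lambda>w. f w + g w))"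
  by (rule finite_subset[of _ "supp f \<union> supp g"]) (auto simp: supp_def)

lemma ring_F: "ring free_ring2"
proof (rule ringI)
  show "abelian_group free_ring2"
  proof (rule abelian_groupI, goal_cases)
    case (6 x)
    then show ?case
      by (intro bexI[of _ "\<lambda>w. - x w"]) (auto simp: carrier_F F_simps supp_def)
  qed (auto simp: carrier_F F_simps finite_supp_add[unfolded supp_def] supp_def)
  show "monoid free_ring2"
    by (rule monoidI) (auto simp: carrier_F F_simps finite_supp_mult fr_assoc fr_one_l fr_one_r,
        auto simp: supp_def fr_one_def)
qed (auto simp: carrier_F F_simps fr_ldistr fr_rdistr)

lemma a_inv_F: "finite (supp f) \<Longrightarrow> a_inv free_ring2 f = (\<lambda>w. - f w)"
proof -
  interpret ring free_ring2 by (rule ring_F)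
  assume "finite (supp f)"
  moreover have "finite (supp (\<lambda>w. - f w))" using calculation by (simp add: supp_def)
  ultimately show ?thesis
    by (intro minus_equality) (auto simp: carrier_F F_simps)
qed

fun walk :: "nat \<Rightarrow> nat \<Rightarrow> bool list \<Rightarrow> nat option" where
  "walk n i [] = (if i < n then Some i else None)"
| "walk n i (True # w) = (if 0 < i \<and> i < n then walk n (i - 1) w else None)"
| "walk n i (False # w) = (if i + 1 < n then walk n (i + 1) w else None)"

lemma walk_lt: "walk n i w = Some j \<Longrightarrow> j < n \<and> i < n"
  by (induction n i w rule: walk.induct) (auto split: if_splits)

lemma walk_append: "walk n i (a @ b) = (case walk n i a of None \<Rightarrow> None | Some m \<Rightarrow> walk n m b)"
proof (induction n i a rule: walk.induct)
  case (1 n i)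
  then show ?case by (cases b; cases "hd b") (auto simp: neq_Nil_conv)
qed auto

definition Phi :: "nat \<Rightarrow> (bool list \<Rightarrow> int) \<Rightarrow> nat \<Rightarrow> nat \<Rightarrow> int" where
  "Phi n h i j = (\<Sum>w\<in>supp h. if walk n i w = Some j then h w else 0)"

lemma Phi_gen:
  assumes "finite A" "supp h \<subseteq> A"
  shows "Phi n h i j = (\<Sum>w\<in>A. if walk n i w = Some j then h w else 0)"
  unfolding Phi_def using assms by (intro sum.mono_neutral_left) (auto simp: supp_def)

lemma Phi_add:
  assumes "finite (supp f)" "finite (supp g)"
  shows "Phi n (\<lambda>w. f w + g w) i j = Phi n f i j + Phi n g i j"
proof -
  have s: "supp f \<subseteq> supp f \<union> supp g" "supp g \<subseteq> supp f \<union> supp g" "supp (\<lambda>w. f w + g w) \<subseteq> supp f \<union> supp g"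
    by (auto simp: supp_def)
  show ?thesis using assms
    by (simp add: Phi_gen[OF _ s(1)] Phi_gen[OF _ s(2)] Phi_gen[OF _ s(3)] sum.distrib[symmetric]
        if_distrib cong: if_cong)
qed

lemma Phi_neg: "Phi n (\<lambda>w. - f w) i j = - Phi n f i j"
proof -
  have "supp (\<lambda>w. - f w) = supp f" by (simp add: supp_def)
  then show ?thesis unfolding Phi_def by (simp add: sum_negf[symmetric] if_distrib cong: if_cong) 
qed

lemma Phi_mult:
  assumes "finite (supp f)" "finite (supp g)"
  shows "Phi n (fr_mult f g) i j = (\<Sum>m<n. Phi n f i m * Phi n g m j)"
proof -
  let ?A = "supp f" and ?B = "supp g"
  let ?C = "(\<lambda>(a,b). a @ b) ` (?A \<times> ?B)"
  have fC: "finite ?C" using assms by auto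
  have sC: "supp (fr_mult f g) \<subseteq> ?C" by (rule supp_mult)
  have "Phi n (fr_mult f g) i j = (\<Sum>c\<in>?C. if walk n i c = Some j then fr_mult f g c else 0)"
    by (rule Phi_gen[OF fC sC])
  also have "\<dots> = (\<Sum>c\<in>?C. \<Sum>a\<in>?A. \<Sum>b\<in>?B. if a @ b = c \<and> walk n i c = Some j then f a * g b else 0)"
    by (rule sum.cong[OF refl])
       (simp add: conv[OF assms order_refl order_refl] if_distrib if_distribR cong: if_cong)
  also have "\<dots> = (\<Sum>a\<in>?A. \<Sum>b\<in>?B. \<Sum>c\<in>?C. if a @ b = c \<and> walk n i c = Some j then f a * g b else 0)"
    by (rule swap3)
  also have "\<dots> = (\<Sum>a\<in>?A. \<Sum>b\<in>?B. if walk n i (a @ b) = Some j then f a * g b else 0)"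
  proof (rule sum.cong[OF refl], rule sum.cong[OF refl])
    fix a b assume "a \<in> ?A" "b \<in> ?B"
    then have ab: "a @ b \<in> ?C" by auto
    have "(\<Sum>c\<in>?C. if a @ b = c \<and> walk n i c = Some j then f a * g b else 0)
        = (\<Sum>c\<in>?C. if a @ b = c then (if walk n i (a @ b) = Some j then f a * g b else 0) else 0)"
      by (rule sum.cong) auto
    then show "(\<Sum>c\<in>?C. if a @ b = c \<and> walk n i c = Some j then f a * g b else 0) = (if walk n i (a @ b) = Some j then f a * g b else 0)"
      using ab fC by (simp add: sum.delta sum.delta')
  qed
  also have "\<dots> = (\<Sum>a\<in>?A. \<Sum>b\<in>?B. \<Sum>m<n. if walk n i a = Some m \<and> walk n m b = Some j then f a * g b else 0)"
  proof (rule sum.cong[OF refl], rule sum.cong[OF refl])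
    fix a b
    show "(if walk n i (a @ b) = Some j then f a * g b else 0) = (\<Sum>m<n. if walk n i a = Some m \<and> walk n m b = Some j then f a * g b else 0)"
    proof (cases "walk n i a")
      case None then show ?thesis by (simp add: walk_append)
    next
      case (Some m)
      then have "m < n" using walk_lt by blast
      have "(\<Sum>m'<n. if walk n i a = Some m' \<and> walk n m' b = Some j then f a * g b else 0)
          = (\<Sum>m'<n. if m = m' then (if walk n m b = Some j then f a * g b else 0) else 0)"
        using Some by (intro sum.cong) auto
      then show ?thesis using Some \<open>m < n\<close> by (simp add: walk_append sum.delta)
    qed
  qed
  also have "\<dots> = (\<Sum>m<n. \<Sum>a\<in>?A. \<Sum>b\<in>?B. if walk n i a = Some m \<and> walk n m b = Some j then f a * g b else 0)"
    by (rule swap3[symmetric])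
  also have "\<dots> = (\<Sum>m<n. Phi n f i m * Phi n g m j)"
    unfolding Phi_def sum_product by (rule sum.cong[OF refl], rule sum.cong[OF refl], rule sum.cong[OF refl]) auto
  finally show ?thesis .
qed

definition delta :: "bool list \<Rightarrow> bool list \<Rightarrow> int" where
  "delta u = (\<lambda>w. if w = u then 1 else 0)"

lemma supp_delta: "supp (delta u) = {u}" by (auto simp: supp_def delta_def)

lemma delta_carr: "delta u \<in> carrier free_ring2"
  by (simp add: carrier_F supp_delta)

lemma delta_mult: "fr_mult (delta a) (delta b) = delta (a @ b)"
proof (rule ext)
  fix w
  show "fr_mult (delta a) (delta b) w = delta (a @ b) w"
    by (subst conv[of "{a}" "{b}"]) (auto simp: supp_delta[unfolded delta_def] delta_def)
qed

lemma gen_x_delta: "gen_x = delta [True]" by (simp add: gen_x_def delta_def)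
lemma gen_y_delta: "gen_y = delta [False]" by (simp add: gen_y_def delta_def)
lemma fr_one_delta: "fr_one = delta []" by (rule ext) (simp add: fr_one_def delta_def)

lemma pow_delta: "delta u [^]\<^bsub>free_ring2\<^esub> (k::nat) = delta (concat (replicate k u))"
proof (induction k)
  case 0 then show ?case by (simp add: F_simps fr_one_delta)
next
  case (Suc k)
  interpret ring free_ring2 by (rule ring_F)
  have "delta u [^]\<^bsub>free_ring2\<^esub> Suc k = delta u [^]\<^bsub>free_ring2\<^esub> k \<otimes>\<^bsub>free_ring2\<^esub> delta u" by simp
  also have "\<dots> = delta (concat (replicate (Suc k) u))"
    using Suc by (simp add: F_simps delta_mult replicate_append_same[symmetric])
  finally show ?case .
qed

lemma add_pow_F_nat: "finite (supp a) \<Longrightarrow> add_pow free_ring2 (k::nat) a = (\<lambda>w. int k * a w)"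
proof -
  interpret ring free_ring2 by (rule ring_F)
  show "finite (supp a) \<Longrightarrow> add_pow free_ring2 (k::nat) a = (\<lambda>w. int k * a w)"
  proof (induction k)
    case 0 then show ?case by (simp add: F_simps)
  next
    case (Suc k)
    show ?case using Suc by (simp add: F_simps algebra_simps)
  qed
qed

lemma add_pow_F: "finite (supp a) \<Longrightarrow> add_pow free_ring2 (z::int) a = (\<lambda>w. z * a w)"
proof (cases "z \<ge> 0")
  case True
  assume "finite (supp a)"
  then show ?thesis using True by (simp add: add_pow_int_ge add_pow_F_nat)
next
  case False
  assume f: "finite (supp a)"
  have "finite (supp (\<lambda>w. int (nat (- z)) * a w))" using f by (rule finite_subset[rotated]) (auto simp: supp_def)
  then show ?thesis using False f by (simp add: add_pow_int_lt add_pow_F_nat a_inv_F)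
qed

definition Kid :: "nat \<Rightarrow> int \<Rightarrow> (bool list \<Rightarrow> int) set" where
  "Kid n N = {h \<in> carrier free_ring2. \<forall>i j. N dvd Phi n h i j}"

lemma Phi_zero: "Phi n (\<lambda>w. 0) i j = 0" by (simp add: Phi_def supp_def)

lemma ideal_K: "ideal (Kid n N) free_ring2"
proof -
  interpret ring free_ring2 by (rule ring_F)
  show ?thesis
  proof (rule idealI)
    show "ring free_ring2" by (rule ring_F)
    show "subgroup (Kid n N) (add_monoid free_ring2)"
    proof (rule add.subgroupI)
      show "Kid n N \<subseteq> carrier free_ring2" by (auto simp: Kid_def)
      have "(\<lambda>w. 0) \<in> Kid n N" by (simp add: Kid_def carrier_F supp_def Phi_zero)
      then show "Kid n N \<noteq> {}" by blast
    next
      fix a assume a: "a \<in> Kid n N"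
      then have fa: "finite (supp a)" by (simp add: Kid_def carrier_F)
      have "\<ominus>\<^bsub>free_ring2\<^esub> a = (\<lambda>w. - a w)"
        using a_inv_F[OF fa] by simp
      moreover have "(\<lambda>w. - a w) \<in> Kid n N"
        using a fa by (auto simp: Kid_def carrier_F Phi_neg supp_def)
      ultimately show "\<ominus>\<^bsub>free_ring2\<^esub> a \<in> Kid n N" by simp
    next
      fix a b assume "a \<in> Kid n N" "b \<in> Kid n N"
      then show "a \<oplus>\<^bsub>free_ring2\<^esub> b \<in> Kid n N"
        by (auto simp: Kid_def carrier_F F_simps Phi_add finite_supp_add)
    qed
  next
    fix a x assume a: "a \<in> Kid n N" and x: "x \<in> carrier free_ring2"
    then show "x \<otimes>\<^bsub>free_ring2\<^esub> a \<in> Kid n N"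
      by (auto simp: Kid_def carrier_F F_simps Phi_mult finite_supp_mult intro!: dvd_sum)
  next
    fix a x assume a: "a \<in> Kid n N" and x: "x \<in> carrier free_ring2"
    then show "a \<otimes>\<^bsub>free_ring2\<^esub> x \<in> Kid n N"
      by (auto simp: Kid_def carrier_F F_simps Phi_mult finite_supp_mult intro!: dvd_sum)
  qed
qed

lemma concat_rep1: "concat (replicate k [a]) = replicate k a"
  by (induction k) auto

lemma walk_repT: "walk n i (replicate k True @ w) = (if k \<le> i \<and> i < n then walk n (i - k) w else None)"
proof (induction k arbitrary: i)
  case 0 then show ?case by (metis append_Nil diff_zero not_None_eq walk_lt zero_le replicate_0)
next
  case (Suc k) then show ?case by auto
qed

lemma walk_repF: "walk n i (replicate k False @ w) = (if i + k < n then walk n (i + k) w else None)"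
proof (induction k arbitrary: i)
  case 0 then show ?case by (metis add_0_right not_None_eq walk_lt append_Nil replicate_0)
next
  case (Suc k) then show ?case by auto
qed

lemma Phi_delta: "Phi n (delta u) i j = (if walk n i u = Some j then 1 else 0)"
  unfolding Phi_def supp_delta by (simp add: delta_def)

lemma Phi_smult: "finite (supp h) \<Longrightarrow> Phi n (\<lambda>w. z * h w) i j = z * Phi n h i j"
proof -
  assume f: "finite (supp h)"
  have "supp (\<lambda>w. z * h w) \<subseteq> supp h" by (auto simp: supp_def)
  then show ?thesis using f
    by (simp add: Phi_gen[OF f] Phi_gen[OF f order_refl] sum_distrib_left if_distrib cong: if_cong)
qed

definition rel3 :: "nat \<Rightarrow> int \<Rightarrow> bool list \<Rightarrow> int" where
  "rel3 n N = (\<lambda>w. delta [True, False] w + (N + 1) * delta (replicate (n - 1) False @ replicate (n - 1) True) w - delta [] w)"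

lemma relators_eq:
  "{ gen_x [^]\<^bsub>free_ring2\<^esub> n,
       gen_y [^]\<^bsub>free_ring2\<^esub> n,
       (gen_x \<otimes>\<^bsub>free_ring2\<^esub> gen_y)
         \<oplus>\<^bsub>free_ring2\<^esub> (add_pow free_ring2 (N + 1)
              ((gen_y [^]\<^bsub>free_ring2\<^esub> (n - 1)) \<otimes>\<^bsub>free_ring2\<^esub> (gen_x [^]\<^bsub>free_ring2\<^esub> (n - 1))))
         \<ominus>\<^bsub>free_ring2\<^esub> \<one>\<^bsub>free_ring2\<^esub> }
   = {delta (replicate n True), delta (replicate n False), rel3 n N}"
proof -
  interpret ring free_ring2 by (rule ring_F)
  have 1: "gen_x [^]\<^bsub>free_ring2\<^esub> n = delta (replicate n True)"
    by (simp add: gen_x_delta pow_delta concat_rep1)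
  have 2: "gen_y [^]\<^bsub>free_ring2\<^esub> n = delta (replicate n False)"
    by (simp add: gen_y_delta pow_delta concat_rep1)
  have 3: "(gen_x \<otimes>\<^bsub>free_ring2\<^esub> gen_y)
         \<oplus>\<^bsub>free_ring2\<^esub> (add_pow free_ring2 (N + 1)
              ((gen_y [^]\<^bsub>free_ring2\<^esub> (n - 1)) \<otimes>\<^bsub>free_ring2\<^esub> (gen_x [^]\<^bsub>free_ring2\<^esub> (n - 1))))
         \<ominus>\<^bsub>free_ring2\<^esub> \<one>\<^bsub>free_ring2\<^esub> = rel3 n N"
  proof -
    let ?u = "replicate (n - 1) False @ replicate (n - 1) True"
    have a: "gen_x \<otimes>\<^bsub>free_ring2\<^esub> gen_y = delta [True, False]"
      by (simp add: gen_x_delta gen_y_delta F_simps delta_mult)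
    have b: "(gen_y [^]\<^bsub>free_ring2\<^esub> (n - 1)) \<otimes>\<^bsub>free_ring2\<^esub> (gen_x [^]\<^bsub>free_ring2\<^esub> (n - 1)) = delta ?u"
      by (simp only: gen_x_delta gen_y_delta pow_delta concat_rep1 F_simps delta_mult)
    have c: "add_pow free_ring2 (N + 1) (delta ?u) = (\<lambda>w. (N + 1) * delta ?u w)"
      by (rule add_pow_F) (simp add: supp_delta)
    have d: "\<ominus>\<^bsub>free_ring2\<^esub> \<one>\<^bsub>free_ring2\<^esub> = (\<lambda>w. - delta [] w)"
      by (simp add: F_simps fr_one_delta a_inv_F supp_delta)
    show ?thesis unfolding a b c a_minus_def d
      by (simp add: F_simps rel3_def)
  qed
  show ?thesis unfolding 1 2 3 ..
qed

lemma relators_K: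
  assumes "n \<ge> 2"
  shows "{delta (replicate n True), delta (replicate n False), rel3 n N} \<subseteq> Kid n N"
proof -
  have c: "finite (supp (rel3 n N))"
    by (rule finite_subset[of _ "{[True, False], replicate (n - 1) False @ replicate (n - 1) True, []}"])
       (auto simp: supp_def rel3_def delta_def)
  have w1: "walk n i (replicate n True) = None" for i
    using walk_repT[of n i n "[]"] by auto
  have w2: "walk n i (replicate n False) = None" for i
    using walk_repF[of n i n "[]"] by auto
  have w3: "walk n i [True, False] = (if 0 < i \<and> i < n then Some i else None)" for i by auto
  have w4: "walk n i (replicate (n - 1) False @ replicate (n - 1) True) = (if i = 0 then Some 0 else None)" for i
    using assms by (simp add: walk_repF walk_repT[of n _ _ "[]", simplified]) linarith
  have w5: "walk n i [] = (if i < n then Some i else None)" for i by simp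
  have "N dvd Phi n (rel3 n N) i j" for i j
  proof -
    have "Phi n (rel3 n N) i j = Phi n (delta [True, False]) i j
        + (N + 1) * Phi n (delta (replicate (n - 1) False @ replicate (n - 1) True)) i j - Phi n (delta []) i j"
    proof -
      let ?u = "replicate (n - 1) False @ replicate (n - 1) True"
      have f1: "finite (supp (delta u))" for u by (simp add: supp_delta)
      have f2: "finite (supp (\<lambda>w. (N + 1) * delta ?u w))"
        by (rule finite_subset[OF _ f1[of ?u]]) (auto simp: supp_def)
      have f3: "finite (supp (\<lambda>w. - delta [] w))"
        by (rule finite_subset[OF _ f1[of "[]"]]) (auto simp: supp_def)
      have f4: "finite (supp (\<lambda>w. delta [True, False] w + (N + 1) * delta ?u w))"
        by (rule finite_supp_add[OF f1 f2])
      have e: "rel3 n N = (\<lambda>w. (\<lambda>w. delta [True, False] w + (N + 1) * delta ?u w) w + (\<lambda>w. - delta [] w) w)"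
        by (simp add: rel3_def)
      show ?thesis unfolding e Phi_add[OF f4 f3] Phi_add[OF f1 f2] Phi_neg Phi_smult[OF f1] by simp
    qed
    also have "\<dots> = (if i = 0 \<and> j = 0 then N else 0)"
      unfolding Phi_delta w3 w4 w5 using assms by auto
    finally show ?thesis by simp
  qed
  then show ?thesis using c
    by (auto simp: Kid_def carrier_F supp_delta Phi_delta w1 w2)
qed

primrec rsum :: "('a, 'm) ring_scheme \<Rightarrow> (nat \<Rightarrow> 'a) \<Rightarrow> nat \<Rightarrow> 'a" where
  "rsum R f 0 = \<zero>\<^bsub>R\<^esub>"
| "rsum R f (Suc k) = rsum R f k \<oplus>\<^bsub>R\<^esub> f k"

lemma add_pow_int_0 [simp]: "[(0::int)] \<cdot>\<^bsub>R\<^esub> a = \<zero>\<^bsub>R\<^esub>"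
  by (simp add: add_pow_def)

context ring begin

lemma diff0_eq: "a \<in> carrier R \<Longrightarrow> b \<in> carrier R \<Longrightarrow> a \<ominus> b = \<zero> \<Longrightarrow> a = b"
proof -
  assume ab: "a \<in> carrier R" "b \<in> carrier R" "a \<ominus> b = \<zero>"
  have "a = (a \<ominus> b) \<oplus> b" using ab(1,2) by algebra
  then show "a = b" using ab by simp
qed

lemma dist1: "a \<in> carrier R \<Longrightarrow> s \<in> carrier R \<Longrightarrow> b \<in> carrier R \<Longrightarrow> a \<otimes> (\<one> \<ominus> s) \<otimes> b = a \<otimes> b \<ominus> a \<otimes> s \<otimes> b"
  by algebra
lemma dist2: "s \<in> carrier R \<Longrightarrow> b \<in> carrier R \<Longrightarrow> (\<one> \<ominus> s) \<otimes> b = b \<ominus> s \<otimes> b"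
  by algebra
lemma dist3: "s \<in> carrier R \<Longrightarrow> a \<in> carrier R \<Longrightarrow> a \<otimes> (\<one> \<ominus> s) = a \<ominus> a \<otimes> s"
  by (simp add: a_minus_def r_distr r_minus)
lemma canc: "a \<in> carrier R \<Longrightarrow> b \<in> carrier R \<Longrightarrow> a \<oplus> b = b \<Longrightarrow> a = \<zero>"
proof -
  assume ab: "a \<in> carrier R" "b \<in> carrier R" "a \<oplus> b = b"
  have "a = (a \<oplus> b) \<ominus> b" using ab(1,2) by algebra
  then show ?thesis using ab by (simp add: a_minus_def)
qed

lemma rsum_closed [simp]: "(\<And>i. f i \<in> carrier R) \<Longrightarrow> rsum R f k \<in> carrier R"
  by (induction k) auto

lemma rsum_cong: "(\<And>i. i < k \<Longrightarrow> f i = g i) \<Longrightarrow> rsum R f k = rsum R g k"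
  by (induction k) auto

lemma rsum_zero: "(\<And>i. i < k \<Longrightarrow> f i = \<zero>) \<Longrightarrow> rsum R f k = \<zero>"
  by (induction k) auto

lemma rsum_ldistr: "(\<And>i. f i \<in> carrier R) \<Longrightarrow> a \<in> carrier R \<Longrightarrow> a \<otimes> rsum R f k = rsum R (\<lambda>i. a \<otimes> f i) k"
  by (induction k) (auto simp: r_distr)

lemma rsum_rdistr: "(\<And>i. f i \<in> carrier R) \<Longrightarrow> a \<in> carrier R \<Longrightarrow> rsum R f k \<otimes> a = rsum R (\<lambda>i. f i \<otimes> a) k"
  by (induction k) (auto simp: l_distr)

lemma rsum_add: "(\<And>i. f i \<in> carrier R) \<Longrightarrow> (\<And>i. g i \<in> carrier R) \<Longrightarrow>
   rsum R (\<lambda>i. f i \<oplus> g i) k = rsum R f k \<oplus> rsum R g k"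
  by (induction k) (auto simp: a_ac)

lemma rsum_delta: "j < k \<Longrightarrow> (\<And>i. f i \<in> carrier R) \<Longrightarrow> (\<And>i. i < k \<Longrightarrow> i \<noteq> j \<Longrightarrow> f i = \<zero>) \<Longrightarrow> rsum R f k = f j"
proof (induction k)
  case 0 then show ?case by simp
next
  case (Suc k)
  show ?case
  proof (cases "j = k")
    case True
    then have "rsum R f k = \<zero>" using Suc by (intro rsum_zero) auto
    then show ?thesis using True Suc by simp
  next
    case False
    then show ?thesis using Suc by simp
  qed
qed

lemma rsum_swap: "(\<And>i j. F i j \<in> carrier R) \<Longrightarrow>
  rsum R (\<lambda>i. rsum R (\<lambda>j. F i j) l) k = rsum R (\<lambda>j. rsum R (\<lambda>i. F i j) k) l"
proof (induction k)
  case 0 then show ?case by (simp add: rsum_zero)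
next
  case (Suc k)
  then show ?case by (simp add: rsum_add)
qed

lemma rsum_pow: "(\<And>i. f i \<in> carrier R) \<Longrightarrow> [(z::int)] \<cdot> rsum R f k = rsum R (\<lambda>i. [z] \<cdot> f i) k"
  by (induction k) (auto simp: add.int_pow_distrib)

lemma rsum_int: "a \<in> carrier R \<Longrightarrow> rsum R (\<lambda>i. [(z i :: int)] \<cdot> a) k = [(\<Sum>i<k. z i)] \<cdot> a"
  by (induction k) (auto simp: add.int_pow_mult)

end

locale pres = ring R for R (structure) +
  fixes X Y :: 'a and m :: nat and N :: int
  assumes X [simp]: "X \<in> carrier R" and Y [simp]: "Y \<in> carrier R" and m1: "1 \<le> m"
    and Xn: "X [^] Suc m = \<zero>" and Yn: "Y [^] Suc m = \<zero>"
    and rel: "X \<otimes> Y \<oplus> add_pow R (N + 1) (Y [^] m \<otimes> X [^] m) \<ominus> \<one> = \<zero>"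
begin

definition "f = Y [^] m \<otimes> X [^] m"
definition "g = [(N + 1)] \<cdot> f"
definition "T (i::nat) = X [^] i \<otimes> g \<otimes> Y [^] i"
definition "S k = rsum R T k"

lemma f_c [simp]: "f \<in> carrier R" by (simp add: f_def)
lemma g_c [simp]: "g \<in> carrier R" by (simp add: g_def)
lemma T_c [simp]: "T i \<in> carrier R" by (simp add: T_def)
lemma S_c [simp]: "S k \<in> carrier R" by (simp add: S_def)

lemma X_big: "Suc m \<le> k \<Longrightarrow> X [^] k = \<zero>"
proof -
  assume "Suc m \<le> k"
  then have "X [^] k = X [^] Suc m \<otimes> X [^] (k - Suc m)" using nat_pow_mult[of X "Suc m" "k - Suc m"] by simp
  then show ?thesis using Xn by (simp del: nat_pow_Suc)
qed

lemma Y_big: "Suc m \<le> k \<Longrightarrow> Y [^] k = \<zero>"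
proof -
  assume "Suc m \<le> k"
  then have "Y [^] k = Y [^] Suc m \<otimes> Y [^] (k - Suc m)" using nat_pow_mult[of Y "Suc m" "k - Suc m"] by simp
  then show ?thesis using Yn by (simp del: nat_pow_Suc)
qed

lemma XY: "X \<otimes> Y = \<one> \<ominus> g"
proof -
  have "X \<otimes> Y \<oplus> g \<ominus> \<one> = \<zero>" using rel by (simp add: g_def f_def)
  then have "X \<otimes> Y \<oplus> g \<ominus> \<one> \<oplus> (\<one> \<ominus> g) = \<one> \<ominus> g" by simp
  moreover have "X \<otimes> Y \<oplus> g \<ominus> \<one> \<oplus> (\<one> \<ominus> g) = X \<otimes> Y" using X Y g_c by algebra
  ultimately show ?thesis by simp
qed

lemma Xn': "X [^] m \<otimes> X = \<zero>" using Xn by simp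
lemma Yn': "Y \<otimes> Y [^] m = \<zero>" using Yn by (metis nat_pow_Suc2 Y)

lemma fX: "f \<otimes> X = \<zero>"
  by (simp add: f_def m_assoc Xn')

lemma Yf: "Y \<otimes> f = \<zero>"
  by (simp add: f_def m_assoc[symmetric] Yn')

lemma gX: "g \<otimes> X = \<zero>"
  by (simp add: g_def add_pow_ldistr_int fX)

lemma Yg: "Y \<otimes> g = \<zero>"
  by (simp add: g_def add_pow_rdistr_int Yf)

lemma XTY: "X \<otimes> T k \<otimes> Y = T (Suc k)"
  unfolding T_def nat_pow_Suc2[OF X, of k] nat_pow_Suc[of Y k] by (simp add: m_assoc del: nat_pow_Suc)

lemma S_Suc: "S (Suc k) = S k \<oplus> T k" by (simp add: S_def)
lemma S_0: "S 0 = \<zero>" by (simp add: S_def)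

lemma S_step: "X \<otimes> S k \<otimes> Y \<oplus> g = S (Suc k)"
proof (induction k)
  case 0 then show ?case by (simp add: S_Suc S_0 T_def)
next
  case (Suc k)
  have "X \<otimes> S (Suc k) \<otimes> Y \<oplus> g = (X \<otimes> S k \<otimes> Y \<oplus> g) \<oplus> X \<otimes> T k \<otimes> Y"
    unfolding S_Suc using X Y g_c S_c T_c by algebra
  also have "\<dots> = S (Suc (Suc k))" using Suc by (simp add: XTY S_Suc[of "Suc k"])
  finally show ?case .
qed

lemma P: "X [^] k \<otimes> Y [^] k = \<one> \<ominus> S k"
proof (induction k)
  case 0 then show ?case by (simp add: S_0 a_minus_def)
next
  case (Suc k)
  have "X [^] Suc k \<otimes> Y [^] Suc k = X \<otimes> (X [^] k \<otimes> Y [^] k) \<otimes> Y"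
    unfolding nat_pow_Suc2[OF X, of k] nat_pow_Suc[of Y k] by (simp add: m_assoc del: nat_pow_Suc)
  also have "\<dots> = X \<otimes> Y \<ominus> X \<otimes> S k \<otimes> Y" unfolding Suc using X Y S_c by algebra
  also have "\<dots> = \<one> \<ominus> (X \<otimes> S k \<otimes> Y \<oplus> g)" unfolding XY using X Y S_c g_c by algebra
  also have "\<dots> = \<one> \<ominus> S (Suc k)" by (simp add: S_step)
  finally show ?case .
qed

lemma Sn: "S (Suc m) = \<one>"
proof -
  have "\<zero> = \<one> \<ominus> S (Suc m)" using P[of "Suc m"] Xn by (simp del: nat_pow_Suc)
  then show ?thesis using S_c[of "Suc m"] by (metis one_closed diff0_eq)
qed

lemma X_split: "(i::nat) \<le> k \<Longrightarrow> X [^] k = X [^] (k - i) \<otimes> X [^] i"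
  using nat_pow_mult[OF X, of "k - i" i] by simp

lemma Y_split: "(i::nat) \<le> k \<Longrightarrow> Y [^] k = Y [^] i \<otimes> Y [^] (k - i)"
  using nat_pow_mult[OF Y, of i "k - i"] by simp

lemma Q: "i < m \<Longrightarrow> g \<otimes> Y [^] i \<otimes> X [^] m = \<zero>"
proof (induction i rule: less_induct)
  case (less i)
  have xy: "X [^] m \<otimes> Y [^] i = X [^] (m - i) \<otimes> (\<one> \<ominus> S i)"
    using less.prems by (simp add: X_split[of i m] m_assoc P del: nat_pow_Suc)
  have z1: "X [^] (m - i) \<otimes> X [^] m = \<zero>"
    using less.prems by (simp add: nat_pow_mult X_big del: nat_pow_Suc)
  have z2: "X [^] (m - i) \<otimes> S i \<otimes> X [^] m = \<zero>"
  proof -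
    have "X [^] (m - i) \<otimes> S i \<otimes> X [^] m = rsum R (\<lambda>l. X [^] (m - i) \<otimes> T l \<otimes> X [^] m) i"
      unfolding S_def by (simp add: rsum_ldistr rsum_rdistr)
    also have "\<dots> = \<zero>"
    proof (rule rsum_zero)
      fix l assume "l < i"
      then have "g \<otimes> Y [^] l \<otimes> X [^] m = \<zero>" using less by simp
      then show "X [^] (m - i) \<otimes> T l \<otimes> X [^] m = \<zero>"
        by (simp add: T_def m_assoc del: nat_pow_Suc)
    qed
    finally show ?thesis .
  qed
  have "X [^] m \<otimes> Y [^] i \<otimes> X [^] m = X [^] (m - i) \<otimes> X [^] m \<ominus> X [^] (m - i) \<otimes> S i \<otimes> X [^] m"
    unfolding xy by (rule dist1) auto
  then have "X [^] m \<otimes> Y [^] i \<otimes> X [^] m = \<zero>" by (simp add: z1 z2 a_minus_def)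
  then have "Y [^] m \<otimes> X [^] m \<otimes> Y [^] i \<otimes> X [^] m = \<zero>" by (simp add: m_assoc del: nat_pow_Suc)
  then show ?case
    by (simp add: g_def f_def add_pow_ldistr_int del: nat_pow_Suc)
qed

lemma u: "X [^] m \<otimes> Y [^] m \<otimes> X [^] m = X [^] m"
proof -
  have z: "S m \<otimes> X [^] m = \<zero>"
  proof -
    have "S m \<otimes> X [^] m = rsum R (\<lambda>i. T i \<otimes> X [^] m) m"
      unfolding S_def by (simp add: rsum_rdistr)
    also have "\<dots> = \<zero>"
    proof (rule rsum_zero)
      fix i assume "i < m"
      then have "g \<otimes> Y [^] i \<otimes> X [^] m = \<zero>" by (rule Q)
      then show "T i \<otimes> X [^] m = \<zero>" by (simp add: T_def m_assoc del: nat_pow_Suc)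
    qed
    finally show ?thesis .
  qed
  have "X [^] m \<otimes> Y [^] m \<otimes> X [^] m = X [^] m \<ominus> S m \<otimes> X [^] m"
    unfolding P by (rule dist2) auto
  then show ?thesis by (simp add: z a_minus_def)
qed

lemma ff: "f \<otimes> f = f"
  using u unfolding f_def by (simp add: m_assoc del: nat_pow_Suc)

lemma fg: "f \<otimes> g = f"
proof -
  have "f \<otimes> X \<otimes> Y = \<zero>" by (simp add: fX)
  then have "f \<otimes> (\<one> \<ominus> g) = \<zero>" by (simp add: m_assoc XY del: nat_pow_Suc)
  moreover have "f \<otimes> (\<one> \<ominus> g) = f \<ominus> f \<otimes> g" by (rule dist3) auto
  ultimately show ?thesis by (metis diff0_eq f_c g_c m_closed)
qed

lemma g_eq_f: "g = f"
proof -
  have "f \<otimes> g = g" by (simp add: g_def add_pow_rdistr_int ff)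
  then show ?thesis using fg by simp
qed

lemma gg: "g \<otimes> g = g" using ff g_eq_f by simp

lemma Ng: "[N] \<cdot> g = \<zero>"
proof -
  have "g = [(N + 1)] \<cdot> g" using g_def g_eq_f by simp
  also have "\<dots> = [N] \<cdot> g \<oplus> g" by (simp add: add.int_pow_mult)
  finally have e: "[N] \<cdot> g \<oplus> g = g" by simp
  show ?thesis using e by (rule canc[rotated 2]) auto
qed

lemma G: "g \<otimes> Y [^] a \<otimes> X [^] m = (if a = m then g else \<zero>)"
proof (cases "a < m")
  case True then show ?thesis using Q by simp
next
  case False
  show ?thesis
  proof (cases "a = m")
    case True
    then show ?thesis using gg g_eq_f by (simp add: f_def m_assoc del: nat_pow_Suc)
  next
    case False
    then have "Y [^] a = \<zero>" using \<open>\<not> a < m\<close> by (intro Y_big) simp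
    then show ?thesis using False by simp
  qed
qed

lemma H: "j \<le> m \<Longrightarrow> k \<le> m \<Longrightarrow> g \<otimes> Y [^] j \<otimes> X [^] k \<otimes> g = (if j = k then g else \<zero>)"
proof (induction k rule: less_induct)
  case (less k)
  let ?a = "g \<otimes> Y [^] j" and ?b = "Y [^] (m - k) \<otimes> X [^] m"
  have "X [^] k \<otimes> Y [^] m = (\<one> \<ominus> S k) \<otimes> Y [^] (m - k)"
    using less.prems Y_split[of k m] P[of k] by (simp add: m_assoc[symmetric] del: nat_pow_Suc)
  then have h1: "X [^] k \<otimes> (Y [^] m \<otimes> X [^] m) = (\<one> \<ominus> S k) \<otimes> (Y [^] (m - k) \<otimes> X [^] m)"
    by (simp add: m_assoc[symmetric] del: nat_pow_Suc)
  have "g \<otimes> Y [^] j \<otimes> X [^] k \<otimes> g = ?a \<otimes> (\<one> \<ominus> S k) \<otimes> ?b"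
    by (subst (2) g_eq_f) (simp add: f_def m_assoc h1 del: nat_pow_Suc)
  also have "\<dots> = ?a \<otimes> ?b \<ominus> ?a \<otimes> S k \<otimes> ?b" by (rule dist1) auto
  also have "?a \<otimes> ?b = g \<otimes> Y [^] (j + (m - k)) \<otimes> X [^] m"
    by (simp add: m_assoc nat_pow_mult[OF Y, symmetric] del: nat_pow_Suc)
  also have "\<dots> = (if j = k then g else \<zero>)"
  proof -
    have "(j + (m - k) = m) = (j = k)" using less.prems by auto
    then show ?thesis by (simp add: G)
  qed
  also have "?a \<otimes> S k \<otimes> ?b = \<zero>"
  proof -
    have "?a \<otimes> S k \<otimes> ?b = rsum R (\<lambda>l. ?a \<otimes> T l \<otimes> ?b) k"
      unfolding S_def by (simp add: rsum_ldistr rsum_rdistr del: nat_pow_Suc)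
    also have "\<dots> = \<zero>"
    proof (rule rsum_zero)
      fix l assume l: "l < k"
      have "?a \<otimes> T l \<otimes> ?b = (g \<otimes> Y [^] j \<otimes> X [^] l \<otimes> g) \<otimes> (Y [^] l \<otimes> ?b)"
        by (simp add: T_def m_assoc del: nat_pow_Suc)
      also have "\<dots> = (if j = l then g \<otimes> Y [^] l \<otimes> Y [^] (m - k) \<otimes> X [^] m else \<zero>)"
        using less.IH[OF l] l less.prems by (simp add: m_assoc del: nat_pow_Suc)
      also have "\<dots> = \<zero>"
      proof -
        have ne: "l + (m - k) \<noteq> m" using l less.prems by arith
        have "g \<otimes> Y [^] l \<otimes> Y [^] (m - k) \<otimes> X [^] m = g \<otimes> Y [^] (l + (m - k)) \<otimes> X [^] m"
          unfolding nat_pow_mult[OF Y, symmetric] by (simp add: m_assoc del: nat_pow_Suc)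
        also have "\<dots> = \<zero>" using G[of "l + (m - k)"] ne by simp
        finally show ?thesis by simp
      qed
      finally show "?a \<otimes> T l \<otimes> ?b = \<zero>" .
    qed
    finally show ?thesis .
  qed
  finally show ?case by (simp add: a_minus_def)
qed

definition "E i j = X [^] (i::nat) \<otimes> g \<otimes> Y [^] (j::nat)"

lemma E_c [simp]: "E i j \<in> carrier R" by (simp add: E_def)

lemma E_mult: "j \<le> m \<Longrightarrow> k \<le> m \<Longrightarrow> E i j \<otimes> E k l = (if j = k then E i l else \<zero>)"
proof -
  assume jk: "j \<le> m" "k \<le> m"
  have "E i j \<otimes> E k l = X [^] i \<otimes> (g \<otimes> Y [^] j \<otimes> X [^] k \<otimes> g) \<otimes> Y [^] l"
    by (simp add: E_def m_assoc del: nat_pow_Suc)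
  then show ?thesis using H[OF jk] by (simp add: E_def)
qed

lemma E_sum: "rsum R (\<lambda>i. E i i) (Suc m) = \<one>"
proof -
  have "(\<lambda>i. E i i) = T" by (rule ext) (simp add: E_def T_def)
  then show ?thesis using Sn by (simp add: S_def del: rsum.simps)
qed

lemma E_tors: "[N] \<cdot> E i j = \<zero>"
proof -
  have "[N] \<cdot> E i j = ([N] \<cdot> (X [^] i \<otimes> g)) \<otimes> Y [^] j"
    unfolding E_def by (rule add_pow_ldistr_int[symmetric]) auto
  also have "[N] \<cdot> (X [^] i \<otimes> g) = X [^] i \<otimes> [N] \<cdot> g"
    by (rule add_pow_rdistr_int[symmetric]) auto
  finally show ?thesis by (simp add: Ng)
qed

lemma E_big: "E (Suc m) j = \<zero>"
  by (simp only: E_def Xn) simp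

lemma Xc: "X \<otimes> X [^] (i::nat) = X [^] i \<otimes> X" by (metis nat_pow_Suc nat_pow_Suc2 X)

lemma X_E: "X = rsum R (\<lambda>i. E (Suc i) i) (Suc m)"
proof -
  have "X = X \<otimes> S (Suc m)" by (simp add: Sn del: rsum.simps)
  also have "\<dots> = rsum R (\<lambda>i. X \<otimes> T i) (Suc m)" unfolding S_def by (rule rsum_ldistr) auto
  also have "\<dots> = rsum R (\<lambda>i. E (Suc i) i) (Suc m)"
    by (rule rsum_cong) (simp add: E_def T_def m_assoc[symmetric] Xc)
  finally show ?thesis .
qed

lemma Y_E: "Y = rsum R (\<lambda>i. E i (Suc i)) (Suc m)"
proof -
  have "Y = S (Suc m) \<otimes> Y" by (simp add: Sn del: rsum.simps)
  also have "\<dots> = rsum R (\<lambda>i. T i \<otimes> Y) (Suc m)" unfolding S_def by (rule rsum_rdistr) auto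
  also have "\<dots> = rsum R (\<lambda>i. E i (Suc i)) (Suc m)"
    by (rule rsum_cong) (simp add: E_def T_def m_assoc)
  finally show ?thesis .
qed

lemma smul_mult: "x \<in> carrier R \<Longrightarrow> y \<in> carrier R \<Longrightarrow> ([(a::int)] \<cdot> x) \<otimes> ([(b::int)] \<cdot> y) = [(a * b)] \<cdot> (x \<otimes> y)"
  by (simp add: add_pow_ldistr_int add_pow_rdistr_int add.int_pow_pow mult.commute)

lemma tors_mod: "[(z mod N)] \<cdot> E i j = [z] \<cdot> E i j"
proof -
  have e1: "[z] \<cdot> E i j = [(z mod N + N * (z div N))] \<cdot> E i j" by simp
  have e2: "[(z mod N + N * (z div N))] \<cdot> E i j = [(z mod N)] \<cdot> E i j \<oplus> [(N * (z div N))] \<cdot> E i j"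
    by (rule add.int_pow_mult) simp
  have e3: "[(N * (z div N))] \<cdot> E i j = [(z div N)] \<cdot> ([N] \<cdot> E i j)"
    by (rule add.int_pow_pow[symmetric]) simp
  show ?thesis unfolding e1 e2 e3 by (simp add: E_tors)
qed

declare rsum.simps [simp del]

definition psi :: "(nat \<Rightarrow> nat \<Rightarrow> int) \<Rightarrow> 'a" where
  "psi A = rsum R (\<lambda>i. rsum R (\<lambda>j. [(A i j)] \<cdot> E i j) (Suc m)) (Suc m)"

lemma psi_c [simp]: "psi A \<in> carrier R"
  by (simp add: psi_def)

lemma psi_mod: "psi (\<lambda>i j. A i j mod N) = psi A"
  by (simp add: psi_def tors_mod)

lemma psi_cong: "(\<And>i j. i < Suc m \<Longrightarrow> j < Suc m \<Longrightarrow> A i j = B i j) \<Longrightarrow> psi A = psi B"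
  unfolding psi_def by (intro rsum_cong) auto

lemma psi_add: "psi (\<lambda>i j. A i j + B i j) = psi A \<oplus> psi B"
  by (simp add: psi_def add.int_pow_mult rsum_add)

lemma psi_smul: "psi (\<lambda>i j. z * A i j) = [z] \<cdot> psi A"
  by (simp add: psi_def rsum_pow add.int_pow_pow mult.commute)

lemma psi_one: "psi (\<lambda>i j. if i = j then 1 else 0) = \<one>"
proof -
  have "psi (\<lambda>i j. if i = j then 1 else 0) = rsum R (\<lambda>i. E i i) (Suc m)"
    unfolding psi_def
  proof (rule rsum_cong)
    fix i assume i: "i < Suc m"
    show "rsum R (\<lambda>j. [(if i = j then 1 else 0::int)] \<cdot> E i j) (Suc m) = E i i"
      by (subst rsum_delta[OF i]) auto
  qed
  then show ?thesis by (simp add: E_sum)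
qed

lemma psi_mult: "psi (\<lambda>i l. \<Sum>k<Suc m. A i k * B k l) = psi A \<otimes> psi B"
proof -
  let ?n = "Suc m"
  have "psi A \<otimes> psi B = rsum R (\<lambda>i. rsum R (\<lambda>j. rsum R (\<lambda>k. rsum R (\<lambda>l.
          ([(A i j)] \<cdot> E i j) \<otimes> ([(B k l)] \<cdot> E k l)) ?n) ?n) ?n) ?n"
  proof -
    have "psi A \<otimes> psi B = rsum R (\<lambda>i. rsum R (\<lambda>j. [(A i j)] \<cdot> E i j) ?n \<otimes> psi B) ?n"
      unfolding psi_def[of A] by (rule rsum_rdistr) auto
    also have "\<dots> = rsum R (\<lambda>i. rsum R (\<lambda>j. ([(A i j)] \<cdot> E i j) \<otimes> psi B) ?n) ?n"
      by (intro rsum_cong rsum_rdistr) auto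
    also have "\<dots> = rsum R (\<lambda>i. rsum R (\<lambda>j. rsum R (\<lambda>k. ([(A i j)] \<cdot> E i j) \<otimes> rsum R (\<lambda>l. [(B k l)] \<cdot> E k l) ?n) ?n) ?n) ?n"
      unfolding psi_def[of B] by (intro rsum_cong rsum_ldistr) auto
    also have "\<dots> = rsum R (\<lambda>i. rsum R (\<lambda>j. rsum R (\<lambda>k. rsum R (\<lambda>l.
          ([(A i j)] \<cdot> E i j) \<otimes> ([(B k l)] \<cdot> E k l)) ?n) ?n) ?n) ?n"
      by (intro rsum_cong rsum_ldistr) auto
    finally show ?thesis .
  qed
  also have "\<dots> = rsum R (\<lambda>i. rsum R (\<lambda>j. rsum R (\<lambda>l. [(A i j * B j l)] \<cdot> E i l) ?n) ?n) ?n"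
  proof (rule rsum_cong, rule rsum_cong)
    fix i j assume j: "j < ?n"
    show "rsum R (\<lambda>k. rsum R (\<lambda>l. ([(A i j)] \<cdot> E i j) \<otimes> ([(B k l)] \<cdot> E k l)) ?n) ?n
        = rsum R (\<lambda>l. [(A i j * B j l)] \<cdot> E i l) ?n"
    proof -
      have "rsum R (\<lambda>k. rsum R (\<lambda>l. ([(A i j)] \<cdot> E i j) \<otimes> ([(B k l)] \<cdot> E k l)) ?n) ?n
          = rsum R (\<lambda>l. ([(A i j)] \<cdot> E i j) \<otimes> ([(B j l)] \<cdot> E j l)) ?n"
      proof (rule rsum_delta[OF j])
        fix k assume "k < ?n" "k \<noteq> j"
        then show "rsum R (\<lambda>l. ([(A i j)] \<cdot> E i j) \<otimes> ([(B k l)] \<cdot> E k l)) ?n = \<zero>"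
          using j by (intro rsum_zero) (simp add: smul_mult E_mult)
      qed auto
      also have "\<dots> = rsum R (\<lambda>l. [(A i j * B j l)] \<cdot> E i l) ?n"
        using j by (intro rsum_cong) (simp add: smul_mult E_mult)
      finally show ?thesis .
    qed
  qed
  also have "\<dots> = rsum R (\<lambda>i. rsum R (\<lambda>l. rsum R (\<lambda>j. [(A i j * B j l)] \<cdot> E i l) ?n) ?n) ?n"
    by (rule rsum_cong, rule rsum_swap) auto
  also have "\<dots> = psi (\<lambda>i l. \<Sum>k<Suc m. A i k * B k l)"
    unfolding psi_def by (intro rsum_cong) (simp add: rsum_int)
  finally show ?thesis by simp
qed

end

definition Rel :: "nat \<Rightarrow> int \<Rightarrow> (bool list \<Rightarrow> int) set" where
  "Rel n N = { gen_x [^]\<^bsub>free_ring2\<^esub> n,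
       gen_y [^]\<^bsub>free_ring2\<^esub> n,
       (gen_x \<otimes>\<^bsub>free_ring2\<^esub> gen_y)
         \<oplus>\<^bsub>free_ring2\<^esub> (add_pow free_ring2 (N + 1)
              ((gen_y [^]\<^bsub>free_ring2\<^esub> (n - 1)) \<otimes>\<^bsub>free_ring2\<^esub> (gen_x [^]\<^bsub>free_ring2\<^esub> (n - 1))))
         \<ominus>\<^bsub>free_ring2\<^esub> \<one>\<^bsub>free_ring2\<^esub> }"

definition Iid :: "nat \<Rightarrow> int \<Rightarrow> (bool list \<Rightarrow> int) set" where
  "Iid n N = genideal free_ring2 (Rel n N)"

lemma presented_eq: "presented_ring n N = free_ring2 Quot Iid n N"
  by (simp add: presented_ring_def Iid_def Rel_def)

lemma Rel_carr: "Rel n N \<subseteq> carrier free_ring2"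
proof -
  have "finite (supp (rel3 n N))"
    by (rule finite_subset[of _ "{[True, False], replicate (n - 1) False @ replicate (n - 1) True, []}"])
       (auto simp: supp_def rel3_def delta_def)
  then show ?thesis unfolding Rel_def relators_eq by (auto simp: carrier_F supp_delta)
qed

lemma I_ideal: "ideal (Iid n N) free_ring2"
  unfolding Iid_def by (rule ring.genideal_ideal[OF ring_F Rel_carr])

lemma Rel_I: "Rel n N \<subseteq> Iid n N"
  unfolding Iid_def by (rule ring.genideal_self[OF ring_F Rel_carr])

lemma I_K: assumes "2 \<le> n" shows "Iid n N \<subseteq> Kid n N"
proof -
  have "Rel n N \<subseteq> Kid n N" unfolding Rel_def relators_eq by (rule relators_K[OF assms])
  then show ?thesis unfolding Iid_def by (rule ring.genideal_minimal[OF ring_F ideal_K])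
qed

locale mainloc =
  fixes n :: nat and N :: int and m :: nat
  assumes n2: "2 \<le> n" and nm: "n = Suc m"
begin

abbreviation "Q \<equiv> free_ring2 Quot Iid n N"
abbreviation "pi \<equiv> (+>\<^bsub>free_ring2\<^esub>) (Iid n N)"
abbreviation "XX \<equiv> pi gen_x"
abbreviation "YY \<equiv> pi gen_y"

lemma hom: "ring_hom_ring free_ring2 Q pi"
  by (rule ideal.rcos_ring_hom_ring[OF I_ideal])

lemma ringQ: "ring Q" by (rule ideal.quotient_is_ring[OF I_ideal])

lemma pi_I: "a \<in> Iid n N \<Longrightarrow> pi a = \<zero>\<^bsub>Q\<^esub>"
proof -
  assume a: "a \<in> Iid n N"
  interpret ideal "Iid n N" free_ring2 by (rule I_ideal)
  show ?thesis using a_rcos_const[OF a] by (simp add: FactRing_def)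
qed

lemma pi_zero_D: "a \<in> carrier free_ring2 \<Longrightarrow> pi a = \<zero>\<^bsub>Q\<^esub> \<Longrightarrow> a \<in> Iid n N"
proof -
  assume a: "a \<in> carrier free_ring2" "pi a = \<zero>\<^bsub>Q\<^esub>"
  interpret ideal "Iid n N" free_ring2 by (rule I_ideal)
  have "a \<in> pi a" by (rule a_rcos_self[OF a(1)])
  then show ?thesis using a(2) by (simp add: FactRing_def)
qed

lemma gens_carr: "gen_x \<in> carrier free_ring2" "gen_y \<in> carrier free_ring2"
  by (simp_all add: gen_x_delta gen_y_delta delta_carr)

lemma pres: "pres Q XX YY m N"
proof -
  interpret H: ring_hom_ring free_ring2 Q pi by (rule hom)
  interpret F: ring free_ring2 by (rule ring_F)
  have Rel: "Rel n N \<subseteq> Iid n N" by (rule Rel_I)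
  note gc = gens_carr
  show ?thesis
  proof (unfold_locales)
    show "XX \<in> carrier Q" "YY \<in> carrier Q" using gc by simp_all
    show "1 \<le> m" using n2 nm by simp
    have f: "pi (gen_x [^]\<^bsub>free_ring2\<^esub> n) = \<zero>\<^bsub>Q\<^esub>" using Rel by (intro pi_I) (auto simp: Rel_def)
    have e: "pi (gen_x [^]\<^bsub>free_ring2\<^esub> n) = XX [^]\<^bsub>Q\<^esub> n" by (rule H.hom_nat_pow[OF gc(1)])
    show "XX [^]\<^bsub>Q\<^esub> Suc m = \<zero>\<^bsub>Q\<^esub>" using e f by (simp add: nm)
    have f: "pi (gen_y [^]\<^bsub>free_ring2\<^esub> n) = \<zero>\<^bsub>Q\<^esub>" using Rel by (intro pi_I) (auto simp: Rel_def)
    have e: "pi (gen_y [^]\<^bsub>free_ring2\<^esub> n) = YY [^]\<^bsub>Q\<^esub> n" by (rule H.hom_nat_pow[OF gc(2)])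
    show "YY [^]\<^bsub>Q\<^esub> Suc m = \<zero>\<^bsub>Q\<^esub>" using e f by (simp add: nm)
    let ?r = "(gen_x \<otimes>\<^bsub>free_ring2\<^esub> gen_y)
         \<oplus>\<^bsub>free_ring2\<^esub> (add_pow free_ring2 (N + 1)
              ((gen_y [^]\<^bsub>free_ring2\<^esub> (n - 1)) \<otimes>\<^bsub>free_ring2\<^esub> (gen_x [^]\<^bsub>free_ring2\<^esub> (n - 1))))
         \<ominus>\<^bsub>free_ring2\<^esub> \<one>\<^bsub>free_ring2\<^esub>"
    have "pi ?r = \<zero>\<^bsub>Q\<^esub>" using Rel by (intro pi_I) (auto simp: Rel_def)
    moreover have "pi ?r = XX \<otimes>\<^bsub>Q\<^esub> YY \<oplus>\<^bsub>Q\<^esub> add_pow Q (N + 1) (YY [^]\<^bsub>Q\<^esub> m \<otimes>\<^bsub>Q\<^esub> XX [^]\<^bsub>Q\<^esub> m) \<ominus>\<^bsub>Q\<^esub> \<one>\<^bsub>Q\<^esub>"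
    proof -
      have nm1: "n - 1 = m" using nm by simp
      let ?a = "gen_x \<otimes>\<^bsub>free_ring2\<^esub> gen_y"
      let ?c = "gen_y [^]\<^bsub>free_ring2\<^esub> m \<otimes>\<^bsub>free_ring2\<^esub> gen_x [^]\<^bsub>free_ring2\<^esub> m"
      let ?b = "add_pow free_ring2 (N + 1) ?c"
      have ca: "?a \<in> carrier free_ring2" and cc: "?c \<in> carrier free_ring2" using gc by auto
      have cb: "?b \<in> carrier free_ring2" using cc by simp
      have pa: "pi ?a = XX \<otimes>\<^bsub>Q\<^esub> YY" using gc by simp
      have pc: "pi ?c = YY [^]\<^bsub>Q\<^esub> m \<otimes>\<^bsub>Q\<^esub> XX [^]\<^bsub>Q\<^esub> m" using gc by (simp add: H.hom_nat_pow)
      have pb: "pi ?b = add_pow Q (N + 1) (pi ?c)"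
        unfolding add_pow_def by (rule group_hom.hom_int_pow[OF H.a_group_hom]) (simp add: cc)
      have "pi ?r = pi (?a \<oplus>\<^bsub>free_ring2\<^esub> ?b) \<oplus>\<^bsub>Q\<^esub> pi (\<ominus>\<^bsub>free_ring2\<^esub> \<one>\<^bsub>free_ring2\<^esub>)"
        unfolding nm1 a_minus_def by (rule H.hom_add) (auto simp: ca cb)
      also have "\<dots> = (pi ?a \<oplus>\<^bsub>Q\<^esub> pi ?b) \<oplus>\<^bsub>Q\<^esub> \<ominus>\<^bsub>Q\<^esub> \<one>\<^bsub>Q\<^esub>"
        using ca cb by simp
      finally show ?thesis unfolding pa pb pc by (simp add: a_minus_def)
    qed
    ultimately show "XX \<otimes>\<^bsub>Q\<^esub> YY \<oplus>\<^bsub>Q\<^esub> add_pow Q (N + 1) (YY [^]\<^bsub>Q\<^esub> m \<otimes>\<^bsub>Q\<^esub> XX [^]\<^bsub>Q\<^esub> m) \<ominus>\<^bsub>Q\<^esub> \<one>\<^bsub>Q\<^esub> = \<zero>\<^bsub>Q\<^esub>"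
      by simp
  qed
qed

end

sublocale mainloc \<subseteq> P: pres Q XX YY m N by (rule pres)

lemma rsum_F: "(\<And>i. finite (supp (f i))) \<Longrightarrow> rsum free_ring2 f k = (\<lambda>w. \<Sum>i<k. f i w)"
  by (induction k) (auto simp: rsum.simps F_simps)

lemma finite_supp_sum: "finite K \<Longrightarrow> (\<And>k. finite (supp (h k))) \<Longrightarrow> finite (supp (\<lambda>w. \<Sum>k\<in>K. h k w))"
proof -
  assume fK: "finite K" and fh: "\<And>k. finite (supp (h k))"
  have "supp (\<lambda>w. \<Sum>k\<in>K. h k w) \<subseteq> (\<Union>k\<in>K. supp (h k))"
  proof
    fix w assume "w \<in> supp (\<lambda>w. \<Sum>k\<in>K. h k w)"
    then have "(\<Sum>k\<in>K. h k w) \<noteq> 0" by (simp add: supp_def)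
    then obtain k where "k \<in> K" "h k w \<noteq> 0" by (meson sum.not_neutral_contains_not_neutral)
    then show "w \<in> (\<Union>k\<in>K. supp (h k))" by (auto simp: supp_def)
  qed
  then show ?thesis by (rule finite_subset) (use fK fh in auto)
qed

lemma Phi_sum:
  assumes "finite K" "\<And>k. finite (supp (h k))"
  shows "Phi n (\<lambda>w. \<Sum>k\<in>K. h k w) i j = (\<Sum>k\<in>K. Phi n (h k) i j)"
proof -
  let ?U = "\<Union>k\<in>K. supp (h k)"
  have fU: "finite ?U" using assms by auto
  have s: "supp (\<lambda>w. \<Sum>k\<in>K. h k w) \<subseteq> ?U"
  proof
    fix w assume "w \<in> supp (\<lambda>w. \<Sum>k\<in>K. h k w)"
    then have "(\<Sum>k\<in>K. h k w) \<noteq> 0" by (simp add: supp_def)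
    then obtain k where "k \<in> K" "h k w \<noteq> 0" by (meson sum.not_neutral_contains_not_neutral)
    then show "w \<in> ?U" by (auto simp: supp_def)
  qed
  have "Phi n (\<lambda>w. \<Sum>k\<in>K. h k w) i j = (\<Sum>w\<in>?U. \<Sum>k\<in>K. if walk n i w = Some j then h k w else 0)"
    unfolding Phi_gen[OF fU s] by (rule sum.cong) auto
  also have "\<dots> = (\<Sum>k\<in>K. \<Sum>w\<in>?U. if walk n i w = Some j then h k w else 0)"
    by (rule sum.swap)
  also have "\<dots> = (\<Sum>k\<in>K. Phi n (h k) i j)"
    by (rule sum.cong[OF refl], rule Phi_gen[symmetric]) (use fU assms in auto)
  finally show ?thesis .
qed

definition wd :: "nat \<Rightarrow> nat \<Rightarrow> nat \<Rightarrow> bool list" where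
  "wd m i j = replicate i True @ replicate m False @ replicate m True @ replicate j False"

definition lift :: "nat \<Rightarrow> (nat \<Rightarrow> nat \<Rightarrow> int) \<Rightarrow> bool list \<Rightarrow> int" where
  "lift m A = (\<lambda>w. \<Sum>i<Suc m. \<Sum>j<Suc m. A i j * delta (wd m i j) w)"

lemma walk_wd: "i < Suc m \<Longrightarrow> j < Suc m \<Longrightarrow> walk (Suc m) i0 (wd m i j) = (if i0 = i then Some j else None)"
  unfolding wd_def by (auto simp: walk_repT walk_repF walk_repF[of _ _ _ "[]", simplified])

lemma Phi_lift: "i < Suc m \<Longrightarrow> j < Suc m \<Longrightarrow> Phi (Suc m) (lift m A) i j = A i j"
proof -
  assume ij: "i < Suc m" "j < Suc m"
  have f1: "finite (supp (\<lambda>w. A i' j' * delta (wd m i' j') w))" for i' j'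
    by (rule finite_subset[of _ "{wd m i' j'}"]) (auto simp: supp_def delta_def)
  have f2: "finite (supp (\<lambda>w. \<Sum>j'<Suc m. A i' j' * delta (wd m i' j') w))" for i'
    by (rule finite_supp_sum) (auto simp: f1)
  have "Phi (Suc m) (lift m A) i j = (\<Sum>i'<Suc m. Phi (Suc m) (\<lambda>w. \<Sum>j'<Suc m. A i' j' * delta (wd m i' j') w) i j)"
    unfolding lift_def by (rule Phi_sum) (rule finite_lessThan, rule f2)
  also have "\<dots> = (\<Sum>i'<Suc m. \<Sum>j'<Suc m. Phi (Suc m) (\<lambda>w. A i' j' * delta (wd m i' j') w) i j)"
    by (rule sum.cong[OF refl], rule Phi_sum) (rule finite_lessThan, rule f1)
  also have "\<dots> = (\<Sum>i'<Suc m. \<Sum>j'<Suc m. if i' = i \<and> j' = j then A i' j' else 0)"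
    by (intro sum.cong refl) (auto simp: Phi_smult supp_delta Phi_delta walk_wd ij)
  also have "\<dots> = (\<Sum>i'<Suc m. if i' = i then (\<Sum>j'<Suc m. if j' = j then A i' j' else 0) else 0)"
    by (rule sum.cong) auto
  also have "\<dots> = A i j" using ij by (simp add: sum.delta del: sum.lessThan_Suc)
  finally show ?thesis .
qed


context mainloc begin

lemma pi_rsum: "(\<And>i. f i \<in> carrier free_ring2) \<Longrightarrow> pi (rsum free_ring2 f k) = rsum Q (\<lambda>i. pi (f i)) k"
proof (induction k)
  interpret H: ring_hom_ring free_ring2 Q pi by (rule hom)
  interpret F: ring free_ring2 by (rule ring_F)
  case 0 then show ?case by (simp add: rsum.simps)
next
  interpret H: ring_hom_ring free_ring2 Q pi by (rule hom)
  interpret F: ring free_ring2 by (rule ring_F)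
  case (Suc k) then show ?case by (simp add: rsum.simps ring.rsum_closed[OF ring_F])
qed

lemma pi_pow: "a \<in> carrier free_ring2 \<Longrightarrow> pi (add_pow free_ring2 (z::int) a) = add_pow Q z (pi a)"
proof -
  interpret H: ring_hom_ring free_ring2 Q pi by (rule hom)
  assume "a \<in> carrier free_ring2"
  then show ?thesis using group_hom.hom_int_pow[OF H.a_group_hom, of a z] by (simp add: add_pow_def)
qed

lemma delta_pow_x: "delta (replicate k True) = gen_x [^]\<^bsub>free_ring2\<^esub> k"
  by (simp add: gen_x_delta pow_delta concat_rep1)
lemma delta_pow_y: "delta (replicate k False) = gen_y [^]\<^bsub>free_ring2\<^esub> k"
  by (simp add: gen_y_delta pow_delta concat_rep1)

lemma pi_delta_wd: "pi (delta (wd m i j)) = P.E i j"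
proof -
  interpret H: ring_hom_ring free_ring2 Q pi by (rule hom)
  interpret F: ring free_ring2 by (rule ring_F)
  have "delta (wd m i j) = gen_x [^]\<^bsub>free_ring2\<^esub> i \<otimes>\<^bsub>free_ring2\<^esub> gen_y [^]\<^bsub>free_ring2\<^esub> m
      \<otimes>\<^bsub>free_ring2\<^esub> gen_x [^]\<^bsub>free_ring2\<^esub> m \<otimes>\<^bsub>free_ring2\<^esub> gen_y [^]\<^bsub>free_ring2\<^esub> j"
    unfolding delta_pow_x[symmetric] delta_pow_y[symmetric] by (simp add: F_simps delta_mult wd_def)
  then have "pi (delta (wd m i j)) = XX [^]\<^bsub>Q\<^esub> i \<otimes>\<^bsub>Q\<^esub> YY [^]\<^bsub>Q\<^esub> m
      \<otimes>\<^bsub>Q\<^esub> XX [^]\<^bsub>Q\<^esub> m \<otimes>\<^bsub>Q\<^esub> YY [^]\<^bsub>Q\<^esub> j"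
    using gens_carr by (simp add: H.hom_nat_pow)
  also have "\<dots> = P.E i j"
    by (simp add: P.E_def P.g_eq_f P.f_def P.m_assoc)
  finally show ?thesis .
qed

lemma finite_supp_smul_delta: "finite (supp (\<lambda>w. z * delta u w))"
  by (rule finite_subset[of _ "{u}"]) (auto simp: supp_def delta_def)

lemma lift_eq: "lift m A = rsum free_ring2 (\<lambda>i. rsum free_ring2 (\<lambda>j. add_pow free_ring2 (A i j) (delta (wd m i j))) (Suc m)) (Suc m)"
proof -
  have inner: "rsum free_ring2 (\<lambda>j. add_pow free_ring2 (A i j) (delta (wd m i j))) (Suc m)
      = (\<lambda>w. \<Sum>j<Suc m. A i j * delta (wd m i j) w)" for i
  proof -
    have "rsum free_ring2 (\<lambda>j. add_pow free_ring2 (A i j) (delta (wd m i j))) (Suc m)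
       = rsum free_ring2 (\<lambda>j w. A i j * delta (wd m i j) w) (Suc m)"
      by (simp add: add_pow_F supp_delta)
    also have "\<dots> = (\<lambda>w. \<Sum>j<Suc m. A i j * delta (wd m i j) w)"
      by (rule rsum_F) (rule finite_supp_smul_delta)
    finally show ?thesis .
  qed
  have fin: "finite (supp (\<lambda>w. \<Sum>j<Suc m. A i j * delta (wd m i j) w))" for i
    by (rule finite_supp_sum) (simp_all add: finite_supp_smul_delta)
  show ?thesis unfolding inner lift_def
    by (rule rsum_F[symmetric]) (rule fin)
qed

lemma lift_carr: "lift m A \<in> carrier free_ring2"
  unfolding lift_def carrier_F mem_Collect_eq
  by (rule finite_supp_sum[OF finite_lessThan], rule finite_supp_sum[OF finite_lessThan], rule finite_supp_smul_delta)

lemma pi_lift: "pi (lift m A) = P.psi A"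
proof -
  interpret F: ring free_ring2 by (rule ring_F)
  have c: "add_pow free_ring2 (A i j) (delta (wd m i j)) \<in> carrier free_ring2" for i j
    by (simp add: delta_carr)
  show ?thesis unfolding lift_eq P.psi_def
    by (simp add: pi_rsum c ring.rsum_closed[OF ring_F] pi_pow delta_carr pi_delta_wd)
qed

end


lemma Phi_diff: "finite (supp a) \<Longrightarrow> finite (supp b) \<Longrightarrow> Phi n (\<lambda>w. a w - b w) i j = Phi n a i j - Phi n b i j"
proof -
  assume fa: "finite (supp a)" and fb: "finite (supp b)"
  have fb': "finite (supp (\<lambda>w. - b w))" using fb by (simp add: supp_def)
  have "(\<lambda>w. a w - b w) = (\<lambda>w. a w + (\<lambda>w. - b w) w)" by simp
  then show ?thesis using Phi_add[OF fa fb', of n i j] Phi_neg[of n b i j] by simp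
qed

context mainloc begin

lemma carrier_mat: "A \<in> carrier (matZN n N) \<longleftrightarrow> (\<forall>i j. A i j mod N = A i j) \<and> (\<forall>i j. (n \<le> i \<or> n \<le> j) \<longrightarrow> A i j = 0)"
  by (simp add: matZN_def)

lemma psi_inj:
  assumes A: "A \<in> carrier (matZN n N)" and B: "B \<in> carrier (matZN n N)" and e: "P.psi A = P.psi B"
  shows "A = B"
proof -
  interpret H: ring_hom_ring free_ring2 Q pi by (rule hom)
  interpret F: ring free_ring2 by (rule ring_F)
  have la: "lift m A \<in> carrier free_ring2" and lb: "lift m B \<in> carrier free_ring2" by (rule lift_carr)+
  have "pi (lift m A \<ominus>\<^bsub>free_ring2\<^esub> lift m B) = pi (lift m A) \<ominus>\<^bsub>Q\<^esub> pi (lift m B)"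
    using la lb by (simp add: a_minus_def)
  also have "\<dots> = \<zero>\<^bsub>Q\<^esub>" unfolding pi_lift e by (simp add: a_minus_def P.r_neg)
  finally have "lift m A \<ominus>\<^bsub>free_ring2\<^esub> lift m B \<in> Iid n N"
    using la lb by (intro pi_zero_D) auto
  then have K: "lift m A \<ominus>\<^bsub>free_ring2\<^esub> lift m B \<in> Kid n N" using I_K[OF n2] by blast
  have fa: "finite (supp (lift m A))" and fb: "finite (supp (lift m B))" using la lb by (simp_all add: carrier_F)
  have "lift m A \<ominus>\<^bsub>free_ring2\<^esub> lift m B = (\<lambda>w. lift m A w - lift m B w)"
    by (simp add: a_minus_def a_inv_F[OF fb] F_simps)
  then have dvd: "N dvd Phi n (lift m A) i j - Phi n (lift m B) i j" for i j
    using K by (simp add: Kid_def Phi_diff[OF fa fb])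
  show "A = B"
  proof (intro ext)
    fix i j
    show "A i j = B i j"
    proof (cases "i < n \<and> j < n")
      case True
      then have "N dvd A i j - B i j" using dvd[of i j] by (simp add: nm Phi_lift)
      then have "A i j mod N = B i j mod N" by (simp add: mod_eq_dvd_iff)
      then show ?thesis using A B by (simp add: carrier_mat)
    next
      case False
      then show ?thesis using A B by (auto simp: carrier_mat)
    qed
  qed
qed

definition "Sp q = (\<exists>B. q = P.psi B)"

lemma Sp_add: "Sp a \<Longrightarrow> Sp b \<Longrightarrow> Sp (a \<oplus>\<^bsub>Q\<^esub> b)"
  unfolding Sp_def using P.psi_add by blast
lemma Sp_mult: "Sp a \<Longrightarrow> Sp b \<Longrightarrow> Sp (a \<otimes>\<^bsub>Q\<^esub> b)"
  unfolding Sp_def using P.psi_mult by blast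
lemma Sp_smul: "Sp a \<Longrightarrow> Sp (add_pow Q (z::int) a)"
  unfolding Sp_def using P.psi_smul by blast
lemma Sp_one: "Sp \<one>\<^bsub>Q\<^esub>"
  unfolding Sp_def using P.psi_one by metis
lemma Sp_zero: "Sp \<zero>\<^bsub>Q\<^esub>"
proof -
  have "Sp (add_pow Q (0::int) \<one>\<^bsub>Q\<^esub>)" by (rule Sp_smul[OF Sp_one])
  then show ?thesis by simp
qed

lemma Sp_X: "Sp XX"
proof -
  let ?M = "\<lambda>i j. if i = Suc j then 1 else 0 :: int"
  have "P.psi ?M = rsum Q (\<lambda>j. rsum Q (\<lambda>i. add_pow Q (?M i j) (P.E i j)) (Suc m)) (Suc m)"
    unfolding P.psi_def by (rule P.rsum_swap) simp
  also have "\<dots> = rsum Q (\<lambda>j. P.E (Suc j) j) (Suc m)"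
  proof (rule P.rsum_cong)
    fix j assume j: "j < Suc m"
    show "rsum Q (\<lambda>i. add_pow Q (?M i j) (P.E i j)) (Suc m) = P.E (Suc j) j"
    proof (cases "Suc j < Suc m")
      case True
      then show ?thesis by (subst P.rsum_delta[OF True]) auto
    next
      case False
      then have "j = m" using j by simp
      then show ?thesis by (simp add: P.E_big P.rsum_zero)
    qed
  qed
  also have "\<dots> = XX" by (rule P.X_E[symmetric])
  finally show ?thesis unfolding Sp_def by metis
qed

lemma E_big2: "P.E i (Suc m) = \<zero>\<^bsub>Q\<^esub>"
proof -
  have "P.E i (Suc m) = XX [^]\<^bsub>Q\<^esub> i \<otimes>\<^bsub>Q\<^esub> P.g \<otimes>\<^bsub>Q\<^esub> YY [^]\<^bsub>Q\<^esub> Suc m" by (simp only: P.E_def)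
  then show ?thesis by (simp only: P.Yn) simp
qed

lemma Sp_Y: "Sp YY"
proof -
  let ?M = "\<lambda>i j. if j = Suc i then 1 else 0 :: int"
  have "P.psi ?M = rsum Q (\<lambda>i. P.E i (Suc i)) (Suc m)"
    unfolding P.psi_def
  proof (rule P.rsum_cong)
    fix i assume i: "i < Suc m"
    show "rsum Q (\<lambda>j. add_pow Q (?M i j) (P.E i j)) (Suc m) = P.E i (Suc i)"
    proof (cases "Suc i < Suc m")
      case True
      then show ?thesis by (subst P.rsum_delta[OF True]) auto
    next
      case False
      then have "i = m" using i by simp
      then show ?thesis by (simp add: E_big2 P.rsum_zero)
    qed
  qed
  also have "\<dots> = YY" by (rule P.Y_E[symmetric])
  finally show ?thesis unfolding Sp_def by metis
qed

lemma Sp_delta: "Sp (pi (delta w))"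
proof (induction w)
  interpret H: ring_hom_ring free_ring2 Q pi by (rule hom)
  case Nil
  have "pi (delta []) = \<one>\<^bsub>Q\<^esub>" using H.hom_one by (simp add: fr_one_delta[symmetric] F_simps)
  then show ?case using Sp_one by simp
next
  interpret H: ring_hom_ring free_ring2 Q pi by (rule hom)
  case (Cons b w)
  have "delta (b # w) = delta [b] \<otimes>\<^bsub>free_ring2\<^esub> delta w" by (simp add: F_simps delta_mult)
  then have "pi (delta (b # w)) = pi (delta [b]) \<otimes>\<^bsub>Q\<^esub> pi (delta w)" by (simp add: delta_carr)
  moreover have "Sp (pi (delta [b]))"
    using Sp_X Sp_Y by (cases b) (simp_all add: gen_x_delta gen_y_delta)
  ultimately show ?case using Cons Sp_mult by simp
qed

lemma Sp_all: "finite S \<Longrightarrow> \<forall>a. supp a \<subseteq> S \<longrightarrow> Sp (pi a)"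
proof (induction S rule: finite_induct)
  interpret H: ring_hom_ring free_ring2 Q pi by (rule hom)
  case empty
  show ?case
  proof (intro allI impI)
    fix a :: "bool list \<Rightarrow> int" assume "supp a \<subseteq> {}"
    then have "a = \<zero>\<^bsub>free_ring2\<^esub>" by (auto simp: supp_def F_simps)
    then show "Sp (pi a)" using Sp_zero by simp
  qed
next
  interpret H: ring_hom_ring free_ring2 Q pi by (rule hom)
  case (insert w S)
  show ?case
  proof (intro allI impI)
    fix a :: "bool list \<Rightarrow> int" assume sa: "supp a \<subseteq> insert w S"
    let ?a' = "a(w := 0)"
    have s': "supp ?a' \<subseteq> S" using sa by (auto simp: supp_def)
    have c': "?a' \<in> carrier free_ring2" using s' insert.hyps by (auto simp: carrier_F intro: finite_subset)
    have ap: "add_pow free_ring2 (a w) (delta w) = (\<lambda>v. a w * delta w v)"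
      by (rule add_pow_F) (simp add: supp_delta)
    have e: "a = ?a' \<oplus>\<^bsub>free_ring2\<^esub> add_pow free_ring2 (a w) (delta w)"
      unfolding ap by (rule ext) (simp add: F_simps delta_def)
    have "pi a = pi ?a' \<oplus>\<^bsub>Q\<^esub> add_pow Q (a w) (pi (delta w))"
      by (subst e) (simp add: c' delta_carr pi_pow)
    moreover have "Sp (pi ?a')" using insert.IH s' by blast
    ultimately show "Sp (pi a)" using Sp_add Sp_smul Sp_delta by metis
  qed
qed

lemma surj: "q \<in> carrier Q \<Longrightarrow> \<exists>A \<in> carrier (matZN n N). P.psi A = q"
proof -
  assume "q \<in> carrier Q"
  then obtain a where a: "a \<in> carrier free_ring2" "q = pi a"
    by (auto simp: FactRing_def A_RCOSETS_def')
  then have "Sp q" using Sp_all[of "supp a"] by (auto simp: carrier_F)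
  then obtain B where B: "q = P.psi B" unfolding Sp_def by blast
  let ?A = "\<lambda>i j. if i < n \<and> j < n then B i j mod N else 0"
  have "?A \<in> carrier (matZN n N)" by (auto simp: carrier_mat)
  moreover have "P.psi ?A = P.psi (\<lambda>i j. B i j mod N)" by (rule P.psi_cong) (simp add: nm)
  then have "P.psi ?A = q" using B by (simp add: P.psi_mod)
  ultimately show ?thesis by blast
qed

lemma iso: "P.psi \<in> ring_iso (matZN n N) Q"
proof (rule ring_iso_memI)
  fix A show "P.psi A \<in> carrier Q" by simp
next
  fix A B
  show "P.psi (A \<otimes>\<^bsub>matZN n N\<^esub> B) = P.psi A \<otimes>\<^bsub>Q\<^esub> P.psi B"
  proof -
    have "P.psi (A \<otimes>\<^bsub>matZN n N\<^esub> B) = P.psi (\<lambda>i l. (\<Sum>k<Suc m. A i k * B k l) mod N)"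
      by (rule P.psi_cong) (simp add: matZN_def mat_mult_mod_def nm)
    also have "\<dots> = P.psi A \<otimes>\<^bsub>Q\<^esub> P.psi B" by (simp only: P.psi_mod P.psi_mult)
    finally show ?thesis .
  qed
next
  fix A B
  show "P.psi (A \<oplus>\<^bsub>matZN n N\<^esub> B) = P.psi A \<oplus>\<^bsub>Q\<^esub> P.psi B"
  proof -
    have "P.psi (A \<oplus>\<^bsub>matZN n N\<^esub> B) = P.psi (\<lambda>i j. (A i j + B i j) mod N)"
      by (simp add: matZN_def mat_add_mod_def[abs_def])
    also have "\<dots> = P.psi A \<oplus>\<^bsub>Q\<^esub> P.psi B" by (simp add: P.psi_mod P.psi_add)
    finally show ?thesis .
  qed
next
  have "P.psi \<one>\<^bsub>matZN n N\<^esub> = P.psi (\<lambda>i j. (if i = j then 1 else 0) mod N)"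
    by (rule P.psi_cong) (simp add: matZN_def mat_one_mod_def nm)
  also have "\<dots> = \<one>\<^bsub>Q\<^esub>" by (simp add: P.psi_mod P.psi_one)
  finally show "P.psi \<one>\<^bsub>matZN n N\<^esub> = \<one>\<^bsub>Q\<^esub>" .
next
  show "bij_betw P.psi (carrier (matZN n N)) (carrier Q)"
    unfolding bij_betw_def
  proof
    show "inj_on P.psi (carrier (matZN n N))" by (rule inj_onI) (rule psi_inj)
    show "P.psi ` carrier (matZN n N) = carrier Q"
    proof
      show "P.psi ` carrier (matZN n N) \<subseteq> carrier Q" by auto
      show "carrier Q \<subseteq> P.psi ` carrier (matZN n N)" using surj by blast
    qed
  qed
qed

end

theorem theorem2:
  fixes n :: nat and N :: int
  assumes "n \<ge> 2"
  shows "matZN n N \<simeq> presented_ring n N"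
proof -
  obtain m where nm: "n = Suc m" using assms by (cases n) auto
  interpret mainloc n N m using assms nm by unfold_locales
  have "P.psi \<in> ring_iso (matZN n N) (presented_ring n N)" unfolding presented_eq by (rule iso)
  then show ?thesis unfolding is_ring_iso_def by blast
qed

end
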